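(* Let $m\ge 3$ and let $C_1,\dots,C_m\subset\mathbb{R}^n$ be nonempty, closed, convex sets in general position, $C=C_1\times\cdots\times C_m$, and $D(x)=\sum_{i=1}^m\|x_i-x_{i+1}\|$ with $x_{m+1}=x_1$. Then $$\inf_{x\in C}D(x)=\inf\{D(x_1,\dots,x_m): x_i\in\operatorname{bd}(C_i),\ 1\le i\le m\},$$ and every minimizer $x^*=(x_1^*,\dots,x_m^* )$ of $D$ over $C$ satisfies $x_i^*\in\operatorname{bd}(C_i)$ for all $i$.
   Context: The family $C_1,\dots,C_m$ is in general position if for every $i$, $C_i\cap\operatorname{conv}\big(\bigcup_{j\ne i}C_j\big)=\varnothing$. $\operatorname{bd}$ denotes the boundary in $\mathbb{R}^n$. *)

theory Defs
  imports "HOL-Analysis.Analysis"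
begin

text \<open>Sets C 0, ..., C (m-1) (0-based indexing of C_1..C_m).
  General position: each C i is disjoint from the convex hull of the union of the others.\<close>
definition general_position :: "nat \<Rightarrow> (nat \<Rightarrow> 'a::real_vector set) \<Rightarrow> bool" where
  "general_position m C \<longleftrightarrow>
     (\<forall>i<m. C i \<inter> convex hull (\<Union>j\<in>{..<m} - {i}. C j) = {})"

definition cyc_len :: "nat \<Rightarrow> (nat \<Rightarrow> 'a::real_normed_vector) \<Rightarrow> real" where
  "cyc_len m x = (\<Sum>i<m. norm (x i - x (Suc i mod m)))"

end

theory Submission
  imports Defs
begin

lemma cyc_convex:
  assumes "0 \<le> t" "t \<le> 1"
  shows "cyc_len m (\<lambda>j. (1 - t) *\<^sub>R u j + t *\<^sub>R v j) \<le> (1 - t) * cyc_len m u + t * cyc_len m v"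
proof -
  have "norm (((1 - t) *\<^sub>R u k + t *\<^sub>R v k) - ((1 - t) *\<^sub>R u l + t *\<^sub>R v l))
        \<le> (1 - t) * norm (u k - u l) + t * norm (v k - v l)" for k l
  proof -
    have "((1 - t) *\<^sub>R u k + t *\<^sub>R v k) - ((1 - t) *\<^sub>R u l + t *\<^sub>R v l)
          = (1 - t) *\<^sub>R (u k - u l) + t *\<^sub>R (v k - v l)"
      by (simp add: algebra_simps)
    also have "norm \<dots> \<le> norm ((1 - t) *\<^sub>R (u k - u l)) + norm (t *\<^sub>R (v k - v l))"
      by (rule norm_triangle_ineq)
    also have "\<dots> = (1 - t) * norm (u k - u l) + t * norm (v k - v l)"
      using assms by simp
    finally show ?thesis .
  qed
  then show ?thesis
    unfolding cyc_len_def
    by (simp add: sum_distrib_left sum.distrib[symmetric] sum_mono)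
qed

lemma cyc_upd:
  assumes "2 \<le> m" "i < m"
  defines "p \<equiv> if i = 0 then m - 1 else i - 1"
  shows "\<exists>R. \<forall>w. cyc_len m (x(i:=w)) = R + norm (x p - w) + norm (w - x (Suc i mod m))"
proof -
  have pm: "p < m" "p \<noteq> i" "Suc p mod m = i"
    using assms by (auto simp: p_def)
  have si: "Suc i mod m \<noteq> i"
  proof (cases "Suc i < m")
    case True then show ?thesis by simp
  next
    case False then have "Suc i = m" using assms by simp
    then show ?thesis using assms by auto
  qed
  have kk: "Suc k mod m \<noteq> i" if "k < m" "k \<noteq> i" "k \<noteq> p" for k
  proof
    assume h: "Suc k mod m = i"
    show False
    proof (cases "Suc k < m")
      case True
      then have "Suc k = i" using h by simp
      then show False using that by (auto simp: p_def)
    next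
      case False
      then have "Suc k = m" using that by simp
      then show False using that h by (auto simp: p_def)
    qed
  qed
  let ?T = "\<lambda>y k. norm (y k - y (Suc k mod m))"
  have dec: "cyc_len m y = ?T y i + (?T y p + sum (?T y) ({..<m} - {i} - {p}))" for y
  proof -
    have "cyc_len m y = ?T y i + sum (?T y) ({..<m} - {i})"
      unfolding cyc_len_def using assms(2) by (simp add: sum.remove)
    also have "sum (?T y) ({..<m} - {i}) = ?T y p + sum (?T y) ({..<m} - {i} - {p})"
      using pm by (intro sum.remove) auto
    finally show ?thesis .
  qed
  have eq: "sum (?T (x(i:=w))) ({..<m} - {i} - {p}) = sum (?T x) ({..<m} - {i} - {p})" for w
    by (rule sum.cong) (use kk in auto)
  show ?thesis
  proof (intro exI allI)
    fix w
    show "cyc_len m (x(i:=w)) = sum (?T x) ({..<m} - {i} - {p}) + norm (x p - w) + norm (w - x (Suc i mod m))"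
      unfolding dec eq using pm si by simp
  qed
qed


lemma gp_notin:
  assumes "general_position m C" "i < m" "j < m" "j \<noteq> i" "c \<in> C j"
  shows "c \<notin> C i"
proof -
  have "c \<in> (\<Union>j\<in>{..<m} - {i}. C j)" using assms by auto
  then have "c \<in> convex hull (\<Union>j\<in>{..<m} - {i}. C j)" by (rule hull_inc)
  then show ?thesis using assms(1,2) unfolding general_position_def by blast
qed

lemma step_lemma:
  fixes C :: "nat \<Rightarrow> 'a::euclidean_space set"
  assumes "m \<ge> 3" "general_position m C" "\<forall>i<m. y i \<in> C i" "k < m"
  shows "\<exists>z\<in>frontier (C k). cyc_len m (y(k:=z)) \<le> cyc_len m y"
proof -
  define p where "p = (if k = 0 then m - 1 else k - 1)"
  have pm: "p < m" "p \<noteq> k" using assms by (auto simp: p_def)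
  obtain R where R: "\<And>w. cyc_len m (y(k:=w)) = R + norm (y p - w) + norm (w - y (Suc k mod m))"
    using cyc_upd[of m k y] assms unfolding p_def by auto
  define a where "a = y p"
  have aC: "a \<notin> C k" using gp_notin[OF assms(2) assms(4) pm(1) pm(2)] assms(3) pm by (auto simp: a_def)
  have "closed_segment (y k) a \<inter> frontier (C k) \<noteq> {}"
    apply (rule connected_Int_frontier)
    using assms(3,4) aC by auto
  then obtain z where z: "z \<in> closed_segment (y k) a" "z \<in> frontier (C k)" by blast
  then obtain t where t: "0 \<le> t" "t \<le> 1" "z = (1 - t) *\<^sub>R y k + t *\<^sub>R a"
    unfolding closed_segment_def by auto
  have fe: "y(k:=z) = (\<lambda>j. (1 - t) *\<^sub>R y j + t *\<^sub>R (y(k:=a)) j)"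
    by (rule ext) (simp add: t(3) algebra_simps)
  have "cyc_len m (y(k:=a)) \<le> cyc_len m y"
  proof -
    have "cyc_len m (y(k:=a)) = R + norm (a - y (Suc k mod m))" using R[of a] by (simp add: a_def)
    also have "\<dots> \<le> R + norm (y p - y k) + norm (y k - y (Suc k mod m))"
      using norm_triangle_ineq[of "a - y k" "y k - y (Suc k mod m)"] by (simp add: a_def)
    also have "\<dots> = cyc_len m y" using R[of "y k"] by simp
    finally show ?thesis .
  qed
  then have "t * cyc_len m (y(k:=a)) \<le> t * cyc_len m y"
    using t(1) by (rule mult_left_mono)
  then have "cyc_len m (y(k:=z)) \<le> cyc_len m y"
    using cyc_convex[OF t(1,2), of m y "y(k:=a)"] unfolding fe[symmetric]
    by (simp add: algebra_simps)
  then show ?thesis using z by blast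
qed


lemma frontier_nonempty_gp:
  fixes C :: "nat \<Rightarrow> 'a::euclidean_space set"
  assumes "m \<ge> 3" "general_position m C" "\<And>i. i < m \<Longrightarrow> C i \<noteq> {}" "i < m"
  shows "frontier (C i) \<noteq> {}"
proof -
  define p where "p = (if i = 0 then m - 1 else i - 1)"
  have pm: "p < m" "p \<noteq> i" using assms by (auto simp: p_def)
  obtain c where c: "c \<in> C p" using assms(3)[OF pm(1)] by blast
  have "c \<notin> C i" using gp_notin[OF assms(2) assms(4) pm c] .
  then have "C i \<noteq> UNIV" by auto
  moreover have "C i \<noteq> {}" using assms(3,4) by blast
  ultimately show ?thesis using frontier_not_empty[of "C i"] by simp
qed

lemma reduce_all:
  fixes C :: "nat \<Rightarrow> 'a::euclidean_space set"
  assumes "m \<ge> 3" "general_position m C" "\<And>i. i < m \<Longrightarrow> closed (C i)" "\<forall>i<m. x i \<in> C i"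
  shows "n \<le> m \<Longrightarrow> \<exists>y. (\<forall>i<m. y i \<in> C i) \<and> (\<forall>i<n. y i \<in> frontier (C i)) \<and> cyc_len m y \<le> cyc_len m x"
proof (induction n)
  case 0
  then show ?case using assms(4) by blast
next
  case (Suc n)
  then obtain y where y: "\<forall>i<m. y i \<in> C i" "\<forall>i<n. y i \<in> frontier (C i)" "cyc_len m y \<le> cyc_len m x"
    by auto
  have nm: "n < m" using Suc by simp
  obtain z where z: "z \<in> frontier (C n)" "cyc_len m (y(n:=z)) \<le> cyc_len m y"
    using step_lemma[OF assms(1,2) y(1) nm] by blast
  have zC: "z \<in> C n" using z(1) assms(3)[OF nm] frontier_subset_closed by blast
  show ?case
  proof (intro exI conjI)
    show "\<forall>i<m. (y(n:=z)) i \<in> C i" using y zC by auto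
    show "\<forall>i<Suc n. (y(n:=z)) i \<in> frontier (C i)" using y z by (auto simp: less_Suc_eq)
    show "cyc_len m (y(n:=z)) \<le> cyc_len m x" using y(3) z(2) by linarith
  qed
qed

lemma ne_imp_ne_helper: "x \<in> S \<Longrightarrow> S \<noteq> {}"
  by auto

theorem mainTheorem3:
  fixes m :: nat and C :: "nat \<Rightarrow> 'a::euclidean_space set"
  assumes "m \<ge> 3"
    and "\<And>i. i < m \<Longrightarrow> C i \<noteq> {}"
    and "\<And>i. i < m \<Longrightarrow> closed (C i)"
    and "\<And>i. i < m \<Longrightarrow> convex (C i)"
    and "general_position m C"
  shows "(INF x\<in>{x. \<forall>i<m. x i \<in> C i}. cyc_len m x)
           = (INF x\<in>{x. \<forall>i<m. x i \<in> frontier (C i)}. cyc_len m x)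
         \<and> (\<forall>xs. (\<forall>i<m. xs i \<in> C i) \<and>
               (\<forall>y. (\<forall>i<m. y i \<in> C i) \<longrightarrow> cyc_len m xs \<le> cyc_len m y)
               \<longrightarrow> (\<forall>i<m. xs i \<in> frontier (C i)))"
proof
  let ?A = "{x. \<forall>i<m. x i \<in> C i}"
  let ?B = "{x. \<forall>i<m. x i \<in> frontier (C i)}"
  have nn: "cyc_len m x \<ge> 0" for x :: "nat \<Rightarrow> 'a" unfolding cyc_len_def by (simp add: sum_nonneg)
  have bdA: "bdd_below (cyc_len m ` ?A)" and bdB: "bdd_below (cyc_len m ` ?B)"
    by (intro bdd_belowI2[where m=0], rule nn)+
  have BA: "?B \<subseteq> ?A"
  proof (intro subsetI CollectI allI impI)
    fix x i assume "x \<in> ?B" and im: "i < m"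
    then have "x i \<in> frontier (C i)" by simp
    then show "x i \<in> C i" using frontier_subset_closed[OF assms(3)[OF im]] by blast
  qed
  define x0 where "x0 = (\<lambda>i. SOME z. z \<in> frontier (C i))"
  have x0B: "x0 \<in> ?B"
  proof (rule CollectI, intro allI impI)
    fix i assume im: "i < m"
    obtain z where "z \<in> frontier (C i)"
      using frontier_nonempty_gp[OF assms(1,5,2) im] by blast
    then show "x0 i \<in> frontier (C i)" unfolding x0_def by (rule someI)
  qed
  have Bne: "?B \<noteq> {}" using x0B by (rule ne_imp_ne_helper)
  have Ane: "?A \<noteq> {}" using subsetD[OF BA x0B] by (rule ne_imp_ne_helper)
  have le1: "(INF x\<in>?A. cyc_len m x) \<le> (INF x\<in>?B. cyc_len m x)"
    by (rule cINF_superset_mono[OF Bne bdA BA]) simp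
  have le2: "(INF x\<in>?B. cyc_len m x) \<le> (INF x\<in>?A. cyc_len m x)"
  proof (rule cINF_greatest[OF Ane])
    fix x assume "x \<in> ?A"
    then obtain y where y: "\<forall>i<m. y i \<in> C i" "\<forall>i<m. y i \<in> frontier (C i)" "cyc_len m y \<le> cyc_len m x"
      using reduce_all[OF assms(1,5,3), of x m] by auto
    have "(INF x\<in>?B. cyc_len m x) \<le> cyc_len m y"
      using y(2) by (intro cINF_lower[OF bdB]) simp
    then show "(INF x\<in>?B. cyc_len m x) \<le> cyc_len m x" using y(3) by linarith
  qed
  show "(INF x\<in>?A. cyc_len m x) = (INF x\<in>?B. cyc_len m x)" using le1 le2 by linarith
next
  show "\<forall>xs. (\<forall>i<m. xs i \<in> C i) \<and>
               (\<forall>y. (\<forall>i<m. y i \<in> C i) \<longrightarrow> cyc_len m xs \<le> cyc_len m y)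
               \<longrightarrow> (\<forall>i<m. xs i \<in> frontier (C i))"
  proof (intro allI impI)
    fix xs i
    assume h: "(\<forall>i<m. xs i \<in> C i) \<and> (\<forall>y. (\<forall>i<m. y i \<in> C i) \<longrightarrow> cyc_len m xs \<le> cyc_len m y)"
      and im: "i < m"
    have h1: "\<forall>i<m. xs i \<in> C i" using h by (rule conjunct1)
    have h2: "\<And>y. (\<forall>i<m. y i \<in> C i) \<Longrightarrow> cyc_len m xs \<le> cyc_len m y" using h by blast
    have xiC: "xs i \<in> C i" using h1 im by blast
    show "xs i \<in> frontier (C i)"
    proof (rule ccontr)
      assume nf: "xs i \<notin> frontier (C i)"
      have "xs i \<in> interior (C i)"
        using nf xiC assms(3)[OF im] by (simp add: frontier_def closure_closed)
      then obtain e where e: "e > 0" "ball (xs i) e \<subseteq> C i"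
        using mem_interior by blast
      define p where "p = (if i = 0 then m - 1 else i - 1)"
      have pm: "p < m" "p \<noteq> i" using assms(1) im by (auto simp: p_def)
      define s where "s = Suc i mod m"
      have sm: "s < m" using im by (simp add: s_def)
      have si: "s \<noteq> i"
      proof (cases "Suc i < m")
        case True then show ?thesis by (simp add: s_def)
      next
        case False then have "Suc i = m" using im by simp
        then show ?thesis using assms(1) by (auto simp: s_def)
      qed
      obtain R where R: "\<And>w. cyc_len m (xs(i:=w)) = R + norm (xs p - w) + norm (w - xs s)"
        using cyc_upd[of m i xs] assms(1) im unfolding p_def s_def by auto
      define a where "a = xs p"
      define t where "t = e / (2 * (norm (a - xs i) + e))"
      have "0 < norm (a - xs i) + e" using e(1) norm_ge_zero[of "a - xs i"] by linarith
      then have npos: "0 < 2 * (norm (a - xs i) + e)" by simp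
      have t0: "0 < t" unfolding t_def using e(1) npos by (rule divide_pos_pos)
      have "e \<le> 2 * norm (a - xs i) + 2 * e" using e(1) norm_ge_zero[of "a - xs i"] by linarith
      then have "e \<le> 2 * (norm (a - xs i) + e)" by (simp add: distrib_left)
      then have t1: "t \<le> 1" unfolding t_def using npos by (simp add: divide_le_eq_1_pos)
      have tn: "t * norm (a - xs i) < e"
      proof -
        have "t * norm (a - xs i) \<le> t * (norm (a - xs i) + e)" using t0 e by simp
        also have "\<dots> = e / 2" using npos by (simp add: t_def field_simps)
        finally show ?thesis using e by simp
      qed
      define z where "z = (1 - t) *\<^sub>R xs i + t *\<^sub>R a"
      have "dist (xs i) z = t * norm (a - xs i)"
      proof -
        have "xs i - z = t *\<^sub>R (xs i - a)" by (simp add: z_def algebra_simps)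
        then show ?thesis using t0 by (simp add: dist_norm norm_minus_commute)
      qed
      then have "z \<in> C i" using e tn by auto
      then have "\<forall>j<m. (xs(i:=z)) j \<in> C j" using h1 by simp
      then have c1: "cyc_len m xs \<le> cyc_len m (xs(i:=z))" by (rule h2)
      have fe: "xs(i:=z) = (\<lambda>j. (1 - t) *\<^sub>R xs j + t *\<^sub>R (xs(i:=a)) j)"
        by (rule ext) (simp add: z_def algebra_simps)
      have c2: "cyc_len m (xs(i:=z)) \<le> (1 - t) * cyc_len m xs + t * cyc_len m (xs(i:=a))"
        unfolding fe using cyc_convex[of t m xs "xs(i:=a)"] t0 t1 by simp
      have "t * cyc_len m xs \<le> t * cyc_len m (xs(i:=a))" using c1 c2 by (simp add: algebra_simps)
      then have "cyc_len m xs \<le> cyc_len m (xs(i:=a))" using t0 by simp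
      then have "norm (a - xs i) + norm (xs i - xs s) \<le> norm (a - xs s)"
        using R[of a] R[of "xs i"] by (simp add: a_def)
      then have "dist a (xs s) = dist a (xs i) + dist (xs i) (xs s)"
        using dist_triangle[of a "xs s" "xs i"] by (simp add: dist_norm)
      then have "between (a, xs s) (xs i)"
        by (simp only: between)
      then have "xs i \<in> convex hull {a, xs s}"
        by (simp only: between_mem_convex_hull)
      moreover have "convex hull {a, xs s} \<subseteq> convex hull (\<Union>j\<in>{..<m} - {i}. C j)"
        apply (rule hull_mono)
        using h1 pm sm si by (auto simp: a_def)
      moreover have "C i \<inter> convex hull (\<Union>j\<in>{..<m} - {i}. C j) = {}"
        using assms(5) im unfolding general_position_def by blast
      moreover note xiC
      ultimately show False by blast
    qed
  qed
qed

end
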